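(* Let $G$ be a connected graph with globally bounded vertex degree, i.e. there is $A<\infty$ with $\deg(v)\le A$ for every vertex $v$ of $G$. Then its clique graph $\mathcal{C}(G)$ also has globally bounded vertex degree, and $\mathcal{C}(G)$ is roughly isometric to $G$ with constants $C=\epsilon=1$. That is, there is a map $f$ from the vertex set of $G$ to the vertex set of $\mathcal{C}(G)$ such that $$d_G(v,v')-1\le d_{\mathcal{C}(G)}(f(v),f(v'))\le d_G(v,v')+1$$ for all vertices $v,v'$ of $G$, and every vertex of $\mathcal{C}(G)$ lies within $d_{\mathcal{C}(G)}$-distance $1$ of some point of $f(G)$.
   Context: A graph is regarded as a metric space on its vertex set via the graph metric: $d_G(v,v')$ is the minimal number of edges in a path joining $v$ and $v'$. A clique of $G$ is a maximal complete subgraph, i.e. a maximal set of vertices that are pairwise joined by edges. The clique graph $\mathcal{C}(G)$ has the cliques of $G$ as its vertices. Two cliques are joined by an edge in $\mathcal{C}(G)$ iff they share at least one vertex of $G$. $\mathcal{C}(G)$ carries its own graph metric $d_{\mathcal{C}(G)}$. A map $f:X\to Y$ between metric spaces is an $\epsilon$-rough isometry (with $C=\epsilon$) if $|d_Y(f(x),f(x'))-d_X(x,x')|\le\epsilon$ for all $x,x'\in X$ and every $y\in Y$ satisfies $d_Y(y,f(x))\le C$ for some $x\in X$. *)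

theory Defs
  imports Main "HOL-Library.Extended_Nat"
begin

definition simple_graph :: "'a set \<Rightarrow> ('a \<Rightarrow> 'a \<Rightarrow> bool) \<Rightarrow> bool" where
  "simple_graph V E \<longleftrightarrow> (\<forall>x y. E x y \<longrightarrow> x \<in> V \<and> y \<in> V \<and> x \<noteq> y \<and> E y x)"

definition walk :: "'a set \<Rightarrow> ('a \<Rightarrow> 'a \<Rightarrow> bool) \<Rightarrow> 'a list \<Rightarrow> bool" where
  "walk V E p \<longleftrightarrow> p \<noteq> [] \<and> set p \<subseteq> V \<and> (\<forall>i. Suc i < length p \<longrightarrow> E (p ! i) (p ! Suc i))"

definition connected_graph :: "'a set \<Rightarrow> ('a \<Rightarrow> 'a \<Rightarrow> bool) \<Rightarrow> bool" where
  "connected_graph V E \<longleftrightarrow> V \<noteq> {} \<and>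
     (\<forall>x\<in>V. \<forall>y\<in>V. \<exists>p. walk V E p \<and> hd p = x \<and> last p = y)"

text \<open>Graph metric: minimal number of edges of a walk from x to y (\<infinity> if none).\<close>
definition gdist :: "'a set \<Rightarrow> ('a \<Rightarrow> 'a \<Rightarrow> bool) \<Rightarrow> 'a \<Rightarrow> 'a \<Rightarrow> enat" where
  "gdist V E x y = (INF n \<in> {n. \<exists>p. walk V E p \<and> length p = Suc n \<and> hd p = x \<and> last p = y}. enat n)"

definition degree :: "'a set \<Rightarrow> ('a \<Rightarrow> 'a \<Rightarrow> bool) \<Rightarrow> 'a \<Rightarrow> nat" where
  "degree V E v = card {w \<in> V. E v w}"

definition bounded_degree :: "'a set \<Rightarrow> ('a \<Rightarrow> 'a \<Rightarrow> bool) \<Rightarrow> bool" where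
  "bounded_degree V E \<longleftrightarrow> (\<exists>A::nat. \<forall>v\<in>V. finite {w \<in> V. E v w} \<and> degree V E v \<le> A)"

definition complete_set :: "('a \<Rightarrow> 'a \<Rightarrow> bool) \<Rightarrow> 'a set \<Rightarrow> bool" where
  "complete_set E K \<longleftrightarrow> (\<forall>x\<in>K. \<forall>y\<in>K. x \<noteq> y \<longrightarrow> E x y)"

definition is_clique :: "'a set \<Rightarrow> ('a \<Rightarrow> 'a \<Rightarrow> bool) \<Rightarrow> 'a set \<Rightarrow> bool" where
  "is_clique V E K \<longleftrightarrow> K \<noteq> {} \<and> K \<subseteq> V \<and> complete_set E K \<and>
     (\<forall>K'. K \<subseteq> K' \<and> K' \<subseteq> V \<and> complete_set E K' \<longrightarrow> K' = K)"

definition cliques :: "'a set \<Rightarrow> ('a \<Rightarrow> 'a \<Rightarrow> bool) \<Rightarrow> 'a set set" where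
  "cliques V E = {K. is_clique V E K}"

definition clique_edge :: "'a set \<Rightarrow> ('a \<Rightarrow> 'a \<Rightarrow> bool) \<Rightarrow> 'a set \<Rightarrow> 'a set \<Rightarrow> bool" where
  "clique_edge V E K L \<longleftrightarrow> K \<in> cliques V E \<and> L \<in> cliques V E \<and> K \<noteq> L \<and> K \<inter> L \<noteq> {}"

end

theory Submission
  imports Defs
begin

lemma successively_nth:
  "successively P xs \<longleftrightarrow> (\<forall>i. Suc i < length xs \<longrightarrow> P (xs!i) (xs!Suc i))"
proof (induction P xs rule: successively.induct)
  case (3 P x y xs)
  show ?case
  proof
    assume h: "successively P (x # y # xs)"
    show "\<forall>i. Suc i < length (x # y # xs) \<longrightarrow> P ((x # y # xs) ! i) ((x # y # xs) ! Suc i)"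
    proof (intro allI impI)
      fix i assume "Suc i < length (x # y # xs)"
      then show "P ((x # y # xs) ! i) ((x # y # xs) ! Suc i)"
        using h 3 by (cases i) auto
    qed
  next
    assume h: "\<forall>i. Suc i < length (x # y # xs) \<longrightarrow> P ((x # y # xs) ! i) ((x # y # xs) ! Suc i)"
    have "P x y" using h[rule_format, of 0] by simp
    moreover have "\<forall>i. Suc i < length (y # xs) \<longrightarrow> P ((y # xs) ! i) ((y # xs) ! Suc i)"
      using h by (metis Suc_less_eq length_Cons nth_Cons_Suc)
    ultimately show "successively P (x # y # xs)" using 3 by simp
  qed
qed auto

lemma walk_succ: "walk V E p \<longleftrightarrow> p \<noteq> [] \<and> set p \<subseteq> V \<and> successively E p"
  unfolding walk_def successively_nth by blast

lemma gdist_le: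
  assumes "walk V E p" shows "gdist V E (hd p) (last p) \<le> enat (length p - 1)"
proof -
  have "p \<noteq> []" using assms walk_def by blast
  then have "length p = Suc (length p - 1)" by simp
  then show ?thesis unfolding gdist_def
    by (intro INF_lower) (use assms in blast)
qed

lemma gdist_cases:
  "gdist V E x y = \<infinity> \<or> (\<exists>p. walk V E p \<and> hd p = x \<and> last p = y \<and> gdist V E x y = enat (length p - 1))"
proof -
  define S where "S = {n. \<exists>p. walk V E p \<and> length p = Suc n \<and> hd p = x \<and> last p = y}"
  have g: "gdist V E x y = (INF n\<in>S. enat n)" unfolding gdist_def S_def by simp
  show ?thesis
  proof (cases "S = {}")
    case True
    then show ?thesis using g by (simp add: top_enat_def)
  next
    case False
    then obtain n0 where "n0 \<in> S" by blast
    define n where "n = (LEAST n. n \<in> S)"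
    have nS: "n \<in> S" unfolding n_def using \<open>n0 \<in> S\<close> by (rule LeastI)
    have "gdist V E x y = enat n"
    proof (rule antisym)
      show "gdist V E x y \<le> enat n" using g nS by (simp add: INF_lower)
      show "enat n \<le> gdist V E x y" unfolding g
        by (rule INF_greatest) (simp add: n_def Least_le)
    qed
    with nS show ?thesis unfolding S_def by auto
  qed
qed

lemma gdist_trans:
  "gdist V E x z \<le> gdist V E x y + gdist V E y z"
proof -
  show ?thesis
  proof (cases "gdist V E x y = \<infinity> \<or> gdist V E y z = \<infinity>")
    case True then show ?thesis by auto
  next
    case False
    obtain p where p: "walk V E p" "hd p = x" "last p = y" "gdist V E x y = enat (length p - 1)"
      using gdist_cases[of V E x y] False by blast
    obtain q where q: "walk V E q" "hd q = y" "last q = z" "gdist V E y z = enat (length q - 1)"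
      using gdist_cases[of V E y z] False by blast
    note 3 = p q
    have pn: "p \<noteq> []" "q \<noteq> []" using 3 walk_def by blast+
    define r where "r = p @ tl q"
    have "walk V E r \<and> hd r = x \<and> last r = z \<and> length r - 1 = (length p - 1) + (length q - 1)"
    proof (cases "tl q")
      case Nil
      have "q = [y]" using 3 pn Nil by (cases q) auto
      then show ?thesis using 3 Nil unfolding r_def by simp
    next
      case (Cons a l)
      have q: "q = y # a # l" using 3 pn Cons by (cases q) auto
      have sq: "successively E q" "set q \<subseteq> V" using 3(5) by (simp_all add: walk_succ)
      have sp: "successively E p" "set p \<subseteq> V" using 3(1) by (simp_all add: walk_succ)
      have ya: "E y a" "successively E (a # l)" using sq(1) q by simp_all
      have "successively E (p @ (a # l))"
        unfolding successively_append_iff using sp(1) ya 3(3) by simp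
      then have s1: "successively E r" unfolding r_def using Cons by simp
      have s2: "set r \<subseteq> V" unfolding r_def using sp sq q by auto
      have "r \<noteq> []" "hd r = x" "last r = z" unfolding r_def using pn 3 q Cons by auto
      moreover have "length r - 1 = (length p - 1) + (length q - 1)" unfolding r_def using pn q by simp
      ultimately show ?thesis using s1 s2 unfolding walk_succ by blast
    qed
    then have "gdist V E x z \<le> enat (length r - 1)" using gdist_le[of V E r] by simp
    then show ?thesis using 3 \<open>_ \<and> _\<close> by simp
  qed
qed

lemma gdist_edge: "E x y \<Longrightarrow> x \<in> V \<Longrightarrow> y \<in> V \<Longrightarrow> gdist V E x y \<le> 1"
  using gdist_le[of V E "[x,y]"] by (simp add: walk_succ one_enat_def)

lemma gdist_refl: "x \<in> V \<Longrightarrow> gdist V E x x \<le> 0"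
  using gdist_le[of V E "[x]"] by (simp add: walk_succ zero_enat_def)

lemma clique_sub:
  assumes "simple_graph V E" "is_clique V E K" "v \<in> K"
  shows "K \<subseteq> insert v {w\<in>V. E v w}"
proof
  fix x assume x: "x \<in> K"
  have KV: "K \<subseteq> V" and c: "complete_set E K" using assms(2) unfolding is_clique_def by auto
  show "x \<in> insert v {w\<in>V. E v w}"
  proof (cases "x = v")
    case False
    then have "E v x" using c x assms(3) unfolding complete_set_def by auto
    then show ?thesis using KV x by auto
  qed simp
qed

lemma exists_clique:
  assumes "simple_graph V E" "\<And>v. v \<in> V \<Longrightarrow> finite {w\<in>V. E v w}"
    and "S \<noteq> {}" "S \<subseteq> V" "complete_set E S"
  shows "\<exists>K. is_clique V E K \<and> S \<subseteq> K"
proof -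
  obtain v where v: "v \<in> S" using assms by blast
  define A where "A = {K. S \<subseteq> K \<and> K \<subseteq> V \<and> complete_set E K}"
  have "A \<subseteq> Pow (insert v {w\<in>V. E v w})"
  proof
    fix K assume "K \<in> A"
    then have K: "S \<subseteq> K" "K \<subseteq> V" "complete_set E K" unfolding A_def by auto
    show "K \<in> Pow (insert v {w\<in>V. E v w})"
    proof (simp, rule subsetI)
      fix x assume x: "x \<in> K"
      show "x \<in> insert v {w\<in>V. E v w}"
      proof (cases "x = v")
        case False
        then have "E v x" using K x v unfolding complete_set_def by auto
        then show ?thesis using K x by auto
      qed simp
    qed
  qed
  moreover have "finite (Pow (insert v {w\<in>V. E v w}))" using assms(2)[of v] assms(4) v by auto
  ultimately have fA: "finite A" by (rule finite_subset)
  have "S \<in> A" unfolding A_def using assms by auto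
  from finite_has_maximal2[OF fA this] obtain m where m: "m \<in> A" "S \<subseteq> m"
    "\<forall>b\<in>A. m \<subseteq> b \<longrightarrow> m = b" by blast
  have "is_clique V E m" unfolding is_clique_def
  proof (intro conjI allI impI)
    show "m \<noteq> {}" using m assms by blast
    show "m \<subseteq> V" "complete_set E m" using m unfolding A_def by auto
    fix K' assume "m \<subseteq> K' \<and> K' \<subseteq> V \<and> complete_set E K'"
    then have "K' \<in> A" using m unfolding A_def by auto
    then show "K' = m" using m \<open>m \<subseteq> K' \<and> _\<close> by blast
  qed
  then show ?thesis using m by blast
qed

lemma in_clique_dist:
  assumes "is_clique V E K" "v \<in> K" "v' \<in> K"
  shows "gdist V E v v' \<le> 1"
proof (cases "v = v'")
  case True
  then show ?thesis using gdist_refl[of v V E] assms unfolding is_clique_def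
    by (meson order.trans subsetD zero_le_one)
next
  case False
  then show ?thesis using assms gdist_edge[of E v v' V] unfolding is_clique_def complete_set_def
    by blast
qed

lemma share_dist:
  assumes "K \<in> cliques V E" "L \<in> cliques V E" "v \<in> K" "v \<in> L"
  shows "gdist (cliques V E) (clique_edge V E) K L \<le> 1"
proof (cases "K = L")
  case True
  then show ?thesis using gdist_refl[of K "cliques V E" "clique_edge V E"] assms
    by (meson order.trans zero_le_one)
next
  case False
  then have "clique_edge V E K L" using assms unfolding clique_edge_def by blast
  then show ?thesis using assms gdist_edge by metis
qed

lemma enat_Suc: "enat (Suc n) = enat n + 1"
  by (simp add: one_enat_def)

lemma lemA:
  assumes "simple_graph V E"
  shows "successively (clique_edge V E) Ks \<Longrightarrow> Ks \<noteq> [] \<Longrightarrow> set Ks \<subseteq> cliques V E \<Longrightarrow>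
    v \<in> hd Ks \<Longrightarrow> v' \<in> last Ks \<Longrightarrow> gdist V E v v' \<le> enat (length Ks)"
proof (induction Ks arbitrary: v)
  case Nil then show ?case by simp
next
  case (Cons K Ks)
  show ?case
  proof (cases "Ks = []")
    case True
    then show ?thesis using Cons.prems in_clique_dist[of V E K v v'] by (simp add: cliques_def one_enat_def)
  next
    case False
    then obtain L rest where Cons2: "Ks = L # rest" by (cases Ks) auto
    have ce: "clique_edge V E K L" using Cons.prems Cons2 by simp
    then obtain w where w: "w \<in> K" "w \<in> L" unfolding clique_edge_def by blast
    have d1: "gdist V E v w \<le> 1" using in_clique_dist[of V E K v w] Cons.prems w ce
      unfolding clique_edge_def cliques_def by simp
    have d2: "gdist V E w v' \<le> enat (length Ks)"
      using Cons.IH[of w] Cons.prems Cons2 w by (simp add: successively_Cons)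
    have "gdist V E v v' \<le> 1 + enat (length Ks)"
      using gdist_trans[of V E v v' w] d1 d2 add_mono order.trans by blast
    then show ?thesis by (simp add: enat_Suc add.commute)
  qed
qed

lemma lemB:
  assumes "simple_graph V E" "\<And>v. v \<in> V \<Longrightarrow> finite {w\<in>V. E v w}"
  shows "successively E us \<Longrightarrow> us \<noteq> [] \<Longrightarrow> set us \<subseteq> V \<Longrightarrow> K \<in> cliques V E \<Longrightarrow>
    hd us \<in> K \<Longrightarrow> K' \<in> cliques V E \<Longrightarrow> last us \<in> K' \<Longrightarrow>
    gdist (cliques V E) (clique_edge V E) K K' \<le> enat (length us)"
proof (induction us arbitrary: K)
  case Nil then show ?case by simp
next
  case (Cons u us)
  show ?case
  proof (cases "us = []")
    case True
    then show ?thesis using Cons.prems share_dist[of K V E K' u] by (simp add: one_enat_def)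
  next
    case False
    then obtain w rest where Cons2: "us = w # rest" by (cases us) auto
    have e: "E u w" using Cons.prems Cons2 by simp
    have "{u, w} \<noteq> {}" "{u,w} \<subseteq> V" using Cons.prems Cons2 by auto
    moreover have "complete_set E {u,w}"
    proof -
      have "E w u" using assms(1) e unfolding simple_graph_def by simp
      then show ?thesis using e unfolding complete_set_def by auto
    qed
    ultimately obtain L where L: "is_clique V E L" "{u,w} \<subseteq> L"
      using exists_clique[OF assms, of "{u,w}"] by blast
    have LC: "L \<in> cliques V E" using L cliques_def by blast
    have d1: "gdist (cliques V E) (clique_edge V E) K L \<le> 1"
      using share_dist[of K V E L u] Cons.prems L LC by simp
    have d2: "gdist (cliques V E) (clique_edge V E) L K' \<le> enat (length us)"
      using Cons.IH[of L] Cons.prems Cons2 L LC by (simp add: successively_Cons)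
    have "gdist (cliques V E) (clique_edge V E) K K' \<le> 1 + enat (length us)"
      using gdist_trans[of "cliques V E" "clique_edge V E" K K' L] d1 d2 add_mono order.trans by blast
    then show ?thesis by (simp add: enat_Suc add.commute)
  qed
qed


lemma clique_nbhd_bound:
  assumes sg: "simple_graph V E" and A: "\<forall>v\<in>V. finite {w \<in> V. E v w} \<and> degree V E v \<le> A"
    and K: "K \<in> cliques V E"
  shows "finite {L \<in> cliques V E. clique_edge V E K L} \<and>
    card {L \<in> cliques V E. clique_edge V E K L} \<le> 2 ^ (Suc A * Suc A)"
proof -
  have Kc: "is_clique V E K" using K cliques_def by blast
  then have KV: "K \<subseteq> V" and Kne: "K \<noteq> {}" unfolding is_clique_def by auto
  then obtain v where v: "v \<in> K" by blast
  have nb: "\<And>w. w \<in> V \<Longrightarrow> finite (insert w {u\<in>V. E w u}) \<and> card (insert w {u\<in>V. E w u}) \<le> Suc A"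
  proof -
    fix w assume w: "w \<in> V"
    have f: "finite {u\<in>V. E w u}" and c: "card {u\<in>V. E w u} \<le> A" using A w unfolding degree_def by auto
    have "card (insert w {u\<in>V. E w u}) \<le> Suc (card {u\<in>V. E w u})" using f by (simp add: card_insert_le_m1)
    then show "finite (insert w {u\<in>V. E w u}) \<and> card (insert w {u\<in>V. E w u}) \<le> Suc A" using f c by simp
  qed
  have Ksub: "K \<subseteq> insert v {u\<in>V. E v u}" using clique_sub[OF sg Kc v] .
  have nv: "finite (insert v {u\<in>V. E v u}) \<and> card (insert v {u\<in>V. E v u}) \<le> Suc A"
    using nb[of v] v KV by auto
  have fK: "finite K" using finite_subset[OF Ksub] nv by simp
  have cK: "card K \<le> Suc A" using card_mono[OF _ Ksub] nv by (meson le_trans)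
  define U where "U = (\<Union>w\<in>K. insert w {u\<in>V. E w u})"
  have fU: "finite U" unfolding U_def by (rule finite_UN_I[OF fK]) (use nb KV in auto)
  have "card U \<le> (\<Sum>w\<in>K. card (insert w {u\<in>V. E w u}))" unfolding U_def by (rule card_UN_le[OF fK])
  also have "\<dots> \<le> (\<Sum>w\<in>K. Suc A)" using nb KV by (intro sum_mono) blast
  also have "\<dots> = card K * Suc A" by simp
  also have "\<dots> \<le> Suc A * Suc A" by (rule mult_le_mono1[OF cK])
  finally have cU: "card U \<le> Suc A * Suc A" .
  have sub: "{L \<in> cliques V E. clique_edge V E K L} \<subseteq> Pow U"
  proof
    fix L assume "L \<in> {L \<in> cliques V E. clique_edge V E K L}"
    then have L: "is_clique V E L" and "K \<inter> L \<noteq> {}" unfolding clique_edge_def cliques_def by auto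
    then obtain w where w: "w \<in> K" "w \<in> L" by blast
    have "L \<subseteq> insert w {u\<in>V. E w u}" using clique_sub[OF sg L w(2)] .
    then show "L \<in> Pow U" unfolding U_def using w by blast
  qed
  have fin: "finite {L \<in> cliques V E. clique_edge V E K L}" using sub fU finite_subset by blast
  have "card {L \<in> cliques V E. clique_edge V E K L} \<le> card (Pow U)" using sub fU by (simp add: card_mono)
  also have "\<dots> = 2 ^ card U" using fU by (simp add: card_Pow)
  also have "\<dots> \<le> 2 ^ (Suc A * Suc A)" by (rule power_increasing[OF cU]) simp
  finally show ?thesis using fin by simp
qed

theorem mainTheorem1:
  fixes V :: "'a set" and E :: "'a \<Rightarrow> 'a \<Rightarrow> bool"
  assumes "simple_graph V E" and "connected_graph V E" and "bounded_degree V E"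
  shows "bounded_degree (cliques V E) (clique_edge V E) \<and>
    (\<exists>f. f ` V \<subseteq> cliques V E \<and>
      (\<forall>v\<in>V. \<forall>v'\<in>V.
         gdist V E v v' \<le> gdist (cliques V E) (clique_edge V E) (f v) (f v') + 1 \<and>
         gdist (cliques V E) (clique_edge V E) (f v) (f v') \<le> gdist V E v v' + 1) \<and>
      (\<forall>K\<in>cliques V E. \<exists>v\<in>V. gdist (cliques V E) (clique_edge V E) K (f v) \<le> 1))"
proof -
  obtain A where A: "\<forall>v\<in>V. finite {w \<in> V. E v w} \<and> degree V E v \<le> A"
    using assms(3) unfolding bounded_degree_def by blast
  have fin: "\<And>v. v \<in> V \<Longrightarrow> finite {w\<in>V. E v w}" using A by blast
  note sg = assms(1)
  let ?C = "cliques V E" and ?CE = "clique_edge V E"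
  have bd: "bounded_degree ?C ?CE"
    unfolding bounded_degree_def degree_def
    using clique_nbhd_bound[OF sg A] by blast
  have ex: "\<And>v. v \<in> V \<Longrightarrow> \<exists>K. K \<in> ?C \<and> v \<in> K"
  proof -
    fix v assume v: "v \<in> V"
    have "complete_set E {v}" unfolding complete_set_def by simp
    then obtain K where "is_clique V E K" "{v} \<subseteq> K" using exists_clique[OF sg fin, of "{v}"] v by blast
    then show "\<exists>K. K \<in> ?C \<and> v \<in> K" unfolding cliques_def by blast
  qed
  define f where "f v = (SOME K. K \<in> ?C \<and> v \<in> K)" for v
  have f: "\<And>v. v \<in> V \<Longrightarrow> f v \<in> ?C \<and> v \<in> f v"
    unfolding f_def using ex by (rule someI_ex)
  have i1: "gdist V E v v' \<le> gdist ?C ?CE (f v) (f v') + 1" if v: "v \<in> V" "v' \<in> V" for v v'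
  proof (cases "gdist ?C ?CE (f v) (f v') = \<infinity>")
    case True then show ?thesis by simp
  next
    case False
    then obtain Ks where Ks: "walk ?C ?CE Ks" "hd Ks = f v" "last Ks = f v'"
      "gdist ?C ?CE (f v) (f v') = enat (length Ks - 1)" using gdist_cases[of ?C ?CE "f v" "f v'"] by fastforce
    have Kn: "successively ?CE Ks" "Ks \<noteq> []" "set Ks \<subseteq> ?C" using Ks(1) by (simp_all add: walk_succ)
    have "gdist V E v v' \<le> enat (length Ks)"
      using lemA[OF sg Kn] Ks f v by simp
    also have "\<dots> = enat (length Ks - 1) + 1" using Kn by (cases Ks) (auto simp: enat_Suc)
    finally show ?thesis using Ks(4) by simp
  qed
  have i2: "gdist ?C ?CE (f v) (f v') \<le> gdist V E v v' + 1" if v: "v \<in> V" "v' \<in> V" for v v'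
  proof (cases "gdist V E v v' = \<infinity>")
    case True then show ?thesis by simp
  next
    case False
    then obtain us where us: "walk V E us" "hd us = v" "last us = v'"
      "gdist V E v v' = enat (length us - 1)" using gdist_cases[of V E v v'] by fastforce
    have un: "successively E us" "us \<noteq> []" "set us \<subseteq> V" using us(1) by (simp_all add: walk_succ)
    have "gdist ?C ?CE (f v) (f v') \<le> enat (length us)"
      using lemB[OF sg fin un] us f v by simp
    also have "\<dots> = enat (length us - 1) + 1" using un by (cases us) (auto simp: enat_Suc)
    finally show ?thesis using us(4) by simp
  qed
  have sur: "\<forall>K\<in>?C. \<exists>v\<in>V. gdist ?C ?CE K (f v) \<le> 1"
  proof
    fix K assume K: "K \<in> ?C"
    then have "K \<noteq> {}" "K \<subseteq> V" unfolding cliques_def is_clique_def by auto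
    then obtain v where v: "v \<in> K" "v \<in> V" by blast
    have "gdist ?C ?CE K (f v) \<le> 1" using share_dist[OF K _ v(1)] f[OF v(2)] by blast
    then show "\<exists>v\<in>V. gdist ?C ?CE K (f v) \<le> 1" using v by blast
  qed
  have "f ` V \<subseteq> ?C" using f by blast
  then show ?thesis using bd i1 i2 sur by blast
qed

end
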